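(* In the Poisson-driven SDE setting, let $\psi:\mathcal K\times\mathcal N^\#_{\mathbb R\times\mathcal K}\to[0,\infty]$ be any measurable functional and $N_{\le0}$ any initial condition. If $N,N':\Omega\to\mathcal N^{\#g}_{\mathbb R\times\mathcal K}$ are two non-explosive marked point processes that both solve the Poisson-driven SDE with intensity functional $\psi$ and initial condition $N_{\le0}$, then $N=N'$ almost surely.
   Context: $\mathcal N^\#_{\mathcal Y}$ denotes the boundedly finite $\{0,1,\dots\}\cup\{\infty\}$-valued Borel measures on a complete separable metric space (CSMS) $\mathcal Y$ (Borel $\sigma$-algebra generated by $\xi\mapsto\xi(A)$); for a CSMS $\mathcal K$ with Borel measure $\ell$, $\mathcal N^{\#g}_{\mathbb R\times\mathcal K}$ is the set of $\xi\in\mathcal N^\#_{\mathbb R\times\mathcal K}$ whose ground measure $\xi(\cdot\times\mathcal K)$ is boundedly finite with mass $0$ or $1$ at each time. Non-explosive marked point processes are measurable maps into $\mathcal N^{\#g}_{\mathbb R\times\mathcal K}$. $\theta_t\xi(A)=\xi(A+t)$, $A+t=\{(s+t,u):(s,u)\in A\}$; $\xi|_I$ is the restriction to $I\times\mathcal K$; $\theta_t\xi^-=(\theta_t\xi)|_{(-\infty,0)}$. SDE setting: $N_{\le0}$ is a non-explosive marked point process on $(\Omega_{\le0},\mathcal F_{\le0},\mathbb P_{\le0})$ with no points in $(0,\infty)\times\mathcal K$; $M_{>0}$ is a Poisson process on $\mathbb R\times\mathcal K\times\mathbb R$ with mean measure $dt\,\ell(dm)\,dz$ on $(\Omega_{>0},\mathcal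 F_{>0},\mathbb P_{>0})$; $(\Omega,\mathcal F,\mathbb P)$ is the completion of the product probability space; $M(\omega):=M_{>0}(\omega_{>0})$ for $\omega=(\omega_{\le0},\omega_{>0})$; $\mathcal F_t$ is the $\mathbb P$-completion of $\mathcal F^{N_{\le0}}_t\otimes\mathcal F^{M_{>0}}_t$, where $\mathcal F^{P}_t$ denotes the internal history $\sigma\{P(A\times U):A\subset(-\infty,t]\}$. A solution of the Poisson-driven SDE is an $\mathbb F$-adapted non-explosive marked point process $N$ such that, almost surely, $N(A)=\iint_A\int_{(0,\lambda(\omega,t,m)]}M(\omega,dt,dm,dz)$ for all Borel $A\subset(0,\infty)\times\mathcal K$, with $\lambda(\omega,t,m)=\psi(m\mid\theta_tN(\omega)^-)$, and $N(\omega)|_{(-\infty,0]}=N_{\le0}(\omega_{\le0})$. *)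

theory Defs
  imports "HOL-Probability.Probability"
begin

definition bf_counting_measure :: "('a::metric_space) measure \<Rightarrow> bool" where
  "bf_counting_measure \<xi> \<longleftrightarrow> sets \<xi> = sets borel \<and>
     (\<forall>A\<in>sets borel. emeasure \<xi> A \<in> range (of_nat :: nat \<Rightarrow> ennreal) \<union> {\<infinity>}) \<and>
     (\<forall>A\<in>sets borel. bounded A \<longrightarrow> emeasure \<xi> A < \<infinity>)"

definition NS :: "('a::metric_space) measure measure" where
  "NS = sigma {\<xi>. bf_counting_measure \<xi>}
     {{\<xi>. bf_counting_measure \<xi> \<and> emeasure \<xi> A \<in> B} | A B.
        A \<in> sets borel \<and> B \<in> sets (borel :: ennreal measure)}"

definition ground_simple :: "(real \<times> 'k::metric_space) measure \<Rightarrow> bool" where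
  "ground_simple \<xi> \<longleftrightarrow> bf_counting_measure \<xi> \<and>
     (\<forall>I\<in>sets (borel :: real measure). bounded I \<longrightarrow> emeasure \<xi> (I \<times> UNIV) < \<infinity>) \<and>
     (\<forall>t. emeasure \<xi> ({t} \<times> UNIV) \<le> 1)"

definition nonexpl_mpp :: "'w measure \<Rightarrow> ('w \<Rightarrow> (real \<times> 'k::metric_space) measure) \<Rightarrow> bool" where
  "nonexpl_mpp P N \<longleftrightarrow> N \<in> measurable P NS \<and> (\<forall>\<omega>\<in>space P. ground_simple (N \<omega>))"

definition poisson_process ::
  "'w measure \<Rightarrow> ('w \<Rightarrow> ('a::metric_space) measure) \<Rightarrow> 'a measure \<Rightarrow> bool" where
  "poisson_process P M \<mu> \<longleftrightarrow> prob_space P \<and> M \<in> measurable P NS \<and>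
     (\<forall>A\<in>sets borel. emeasure \<mu> A < \<infinity> \<longrightarrow>
        (\<forall>k::nat. measure P {\<omega>\<in>space P. emeasure (M \<omega>) A = of_nat k} =
            exp (- enn2real (emeasure \<mu> A)) * enn2real (emeasure \<mu> A) ^ k / fact k)) \<and>
     (\<forall>(n::nat) A. (\<forall>i<n. A i \<in> sets borel) \<longrightarrow> disjoint_family_on A {..<n} \<longrightarrow>
        prob_space.indep_vars P (\<lambda>_. borel) (\<lambda>i \<omega>. emeasure (M \<omega>) (A i)) {..<n})"

definition shift :: "real \<Rightarrow> (real \<times> 'k::topological_space) measure \<Rightarrow> (real \<times> 'k) measure" where
  "shift t \<xi> = distr \<xi> borel (\<lambda>(s, u). (s - t, u))"

definition restr :: "(real \<times> 'k::topological_space) measure \<Rightarrow> real set \<Rightarrow> (real \<times> 'k) measure" where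
  "restr \<xi> I = density \<xi> (indicator (I \<times> UNIV))"

definition hist :: "'w measure \<Rightarrow> ('w \<Rightarrow> (real \<times> 'b::topological_space) measure) \<Rightarrow> real \<Rightarrow> 'w set set" where
  "hist P X t = sigma_sets (space P)
     {{\<omega>\<in>space P. emeasure (X \<omega>) A \<in> B} | A B.
        A \<in> sets borel \<and> A \<subseteq> {..t} \<times> UNIV \<and> B \<in> sets (borel :: ennreal measure)}"

definition augment :: "'w measure \<Rightarrow> 'w set set \<Rightarrow> 'w set set" where
  "augment P G = {A. A \<subseteq> space P \<and> (\<exists>B\<in>G. \<exists>Z\<in>null_sets P. (A - B) \<union> (B - A) \<subseteq> Z)}"

definition sde_filtration ::
  "'w0 measure \<Rightarrow> ('w0 \<Rightarrow> (real \<times> 'k::topological_space) measure) \<Rightarrow>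
   'w1 measure \<Rightarrow> ('w1 \<Rightarrow> (real \<times> ('k \<times> real)) measure) \<Rightarrow> real \<Rightarrow> ('w0 \<times> 'w1) set set" where
  "sde_filtration P0 N0 P1 M1 t =
     augment (completion (P0 \<Otimes>\<^sub>M P1))
       (sets (sigma (space P0) (hist P0 N0 t) \<Otimes>\<^sub>M sigma (space P1) (hist P1 M1 t)))"

definition sde_solution ::
  "'w0 measure \<Rightarrow> ('w0 \<Rightarrow> (real \<times> 'k::metric_space) measure) \<Rightarrow>
   'w1 measure \<Rightarrow> ('w1 \<Rightarrow> (real \<times> ('k \<times> real)) measure) \<Rightarrow>
   ('k \<Rightarrow> (real \<times> 'k) measure \<Rightarrow> ennreal) \<Rightarrow>
   ('w0 \<times> 'w1 \<Rightarrow> (real \<times> 'k) measure) \<Rightarrow> bool" where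
  "sde_solution P0 N0 P1 M1 \<psi> N \<longleftrightarrow>
     nonexpl_mpp (completion (P0 \<Otimes>\<^sub>M P1)) N \<and>
     (\<forall>t. \<forall>A\<in>sets borel. A \<subseteq> {..t} \<times> UNIV \<longrightarrow>
        (\<lambda>\<omega>. emeasure (N \<omega>) A) \<in> borel_measurable
           (sigma (space (completion (P0 \<Otimes>\<^sub>M P1))) (sde_filtration P0 N0 P1 M1 t))) \<and>
     (AE \<omega> in completion (P0 \<Otimes>\<^sub>M P1).
        (\<forall>A\<in>sets borel. A \<subseteq> {0<..} \<times> UNIV \<longrightarrow>
           emeasure (N \<omega>) A =
           emeasure (M1 (snd \<omega>))
             {(t, m, z). (t, m) \<in> A \<and> 0 < z \<and> ennreal z \<le> \<psi> m (restr (shift t (N \<omega>)) {..<0})}) \<and>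
        (\<forall>A\<in>sets borel. emeasure (N \<omega>) (A \<inter> ({..0} \<times> UNIV)) = emeasure (N0 (fst \<omega>)) A))"

end

theory Submission
  imports Defs
begin

lemma shift_meas: "(\<lambda>(s::real, u::'k::metric_space). (s - t, u)) \<in> borel_measurable borel"
proof -
  have "(\<lambda>p::real\<times>'k. (fst p - t, snd p)) \<in> borel_measurable borel"
    by (intro borel_measurable_continuous_onI continuous_on_Pair continuous_on_diff
        continuous_on_fst continuous_on_snd continuous_on_const continuous_on_id)
  thus ?thesis by (simp add: case_prod_beta')
qed

lemma restr_shift_eq:
  fixes \<xi> \<xi>' :: "(real \<times> 'k::metric_space) measure"
  assumes s: "sets \<xi> = sets borel" "sets \<xi>' = sets borel"
  and ag: "\<forall>A\<in>sets borel. A \<subseteq> {..<t}\<times>UNIV \<longrightarrow> emeasure \<xi> A = emeasure \<xi>' A"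
  shows "restr (shift t \<xi>) {..<0} = restr (shift t \<xi>') {..<0}"
proof -
  let ?g = "\<lambda>(s::real, u::'k). (s - t, u)"
  let ?S = "{..<(0::real)} \<times> (UNIV::'k set)"
  have g1: "?g \<in> measurable \<xi> borel"
    using shift_meas[of t] measurable_cong_sets[OF s(1) refl, of borel] by (metis (no_types))
  have g2: "?g \<in> measurable \<xi>' borel"
    using shift_meas[of t] measurable_cong_sets[OF s(2) refl, of borel] by (metis (no_types))
  note g = g1 g2
  have dummy: True
    using shift_meas[of t] measurable_cong_sets[OF s(1) refl, of borel]
      measurable_cong_sets[OF s(2) refl, of borel] by simp
  have sp: "space \<xi> = UNIV" "space \<xi>' = UNIV"
    using sets_eq_imp_space_eq[OF s(1)] sets_eq_imp_space_eq[OF s(2)] by simp_all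
  have S: "?S \<in> sets borel" by (intro borel_open open_Times open_lessThan open_UNIV)
  have key: "emeasure (density (distr \<mu> borel ?g) (indicator ?S)) X = emeasure \<mu> (?g -` (?S \<inter> X))"
    if g: "?g \<in> measurable \<mu> borel" and sp: "space \<mu> = UNIV" and X: "X \<in> sets borel"
    for \<mu> :: "(real \<times> 'k) measure" and X
  proof -
    have "emeasure (density (distr \<mu> borel ?g) (indicator ?S)) X = emeasure (distr \<mu> borel ?g) (?S \<inter> X)"
      by (rule emeasure_restricted) (use S X in simp_all)
    also have "\<dots> = emeasure \<mu> (?g -` (?S \<inter> X) \<inter> space \<mu>)"
      by (rule emeasure_distr[OF g]) (use S X in blast)
    finally show ?thesis using sp by simp
  qed
  show ?thesis unfolding restr_def shift_def
  proof (rule measure_eqI)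
    show "sets (density (distr \<xi> borel ?g) (indicator ?S)) = sets (density (distr \<xi>' borel ?g) (indicator ?S))"
      by simp
    fix X assume X: "X \<in> sets (density (distr \<xi> borel ?g) (indicator ?S))"
    hence Xb: "X \<in> sets borel" by simp
    have pre: "?g -` (?S \<inter> X) \<in> sets borel"
      using measurable_sets[OF shift_meas[of t], of "?S \<inter> X"] S Xb by (simp add: sets.Int)
    have sub: "?g -` (?S \<inter> X) \<subseteq> {..<t}\<times>UNIV" by auto
    show "emeasure (density (distr \<xi> borel ?g) (indicator ?S)) X =
          emeasure (density (distr \<xi>' borel ?g) (indicator ?S)) X"
      unfolding key[OF g(1) sp(1) Xb] key[OF g(2) sp(2) Xb] using ag pre sub by blast
  qed
qed

lemma union_agree:
  fixes \<xi> \<xi>' :: "'a::topological_space measure"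
  assumes s: "sets \<xi> = sets borel" "sets \<xi>' = sets borel"
    and A: "A \<in> sets borel" and inc: "incseq C" and C: "\<And>n. C n \<in> sets borel"
    and cov: "A \<subseteq> (\<Union>n. C n)" and eq: "\<And>n. emeasure \<xi> (A \<inter> C n) = emeasure \<xi>' (A \<inter> C n)"
  shows "emeasure \<xi> A = emeasure \<xi>' A"
proof -
  have incA: "incseq (\<lambda>n. A \<inter> C n)" using inc by (auto simp: incseq_def)
  have U: "(\<Union>n. A \<inter> C n) = A" using cov by auto
  have r: "range (\<lambda>n. A \<inter> C n) \<subseteq> sets borel" using A C by auto
  have "emeasure \<xi> A = (SUP n. emeasure \<xi> (A \<inter> C n))"
    using SUP_emeasure_incseq[of "\<lambda>n. A \<inter> C n" \<xi>] incA r s U by simp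
  also have "\<dots> = (SUP n. emeasure \<xi>' (A \<inter> C n))" using eq by simp
  also have "\<dots> = emeasure \<xi>' A"
    using SUP_emeasure_incseq[of "\<lambda>n. A \<inter> C n" \<xi>'] incA r s U by simp
  finally show ?thesis .
qed

lemma zero_near:
  fixes \<xi> :: "(real \<times> 'k::metric_space) measure"
  assumes gs: "ground_simple \<xi>"
  shows "\<exists>\<delta>>0. emeasure \<xi> ({T<..<T+\<delta>}\<times>UNIV) = 0"
proof -
  have bf: "bf_counting_measure \<xi>" using gs by (simp add: ground_simple_def)
  hence s: "sets \<xi> = sets borel" by (simp add: bf_counting_measure_def)
  define C where "C n = {T<..<T + 1/Suc n} \<times> (UNIV::'k set)" for n
  have Cb: "C n \<in> sets \<xi>" for n unfolding C_def s by (intro borel_open open_Times) auto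
  have anti: "antimono_on UNIV C"
    unfolding C_def monotone_on_def
    by (auto simp: frac_le order.strict_trans2 divide_le_cancel)
  have fin1: "emeasure \<xi> ({T<..<T+1}\<times>UNIV) < \<infinity>"
  proof -
    have "bounded {T<..<T+1}" by (metis bounded_box box_real(1))
    thus ?thesis using gs unfolding ground_simple_def by auto
  qed
  have fin: "emeasure \<xi> (C n) \<noteq> \<infinity>" for n
  proof -
    have "C n \<subseteq> {T<..<T+1}\<times>UNIV" unfolding C_def
      by (auto simp: divide_le_eq order.strict_trans2)
    hence "emeasure \<xi> (C n) \<le> emeasure \<xi> ({T<..<T+1}\<times>UNIV)"
      by (intro emeasure_mono) (auto simp: s intro!: borel_open open_Times)
    thus ?thesis using fin1 by auto
  qed
  have empty: "(\<Inter>n. C n) = {}"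
  proof (rule ccontr)
    assume "(\<Inter>n. C n) \<noteq> {}"
    then obtain x y where xy: "\<And>n. (x,y) \<in> C n" by auto
    hence "x > T" unfolding C_def by auto
    then obtain n where "1 / Suc n < x - T"
      using nat_approx_posE[of "x - T"] by (metis diff_gt_0_iff_gt of_nat_Suc)
    with xy[of n] show False unfolding C_def by auto
  qed
  have "(INF n. emeasure \<xi> (C n)) = 0"
    using INF_emeasure_decseq[of C \<xi>] Cb anti fin empty by auto
  hence "(INF n. emeasure \<xi> (C n)) < 1" by simp
  then obtain n where n: "emeasure \<xi> (C n) < 1" by (auto simp: INF_less_iff)
  have "emeasure \<xi> (C n) \<in> range (of_nat :: nat \<Rightarrow> ennreal) \<union> {\<infinity>}"
    using bf Cb unfolding bf_counting_measure_def s by blast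
  with n fin[of n] have "emeasure \<xi> (C n) = 0" by auto
  thus ?thesis unfolding C_def by (intro exI[of _ "1/Suc n"]) auto
qed


lemma det_unique:
  fixes \<xi> \<xi>' \<zeta> :: "(real \<times> 'k::metric_space) measure"
    and \<nu> :: "(real \<times> ('k \<times> real)) measure"
    and \<psi> :: "'k \<Rightarrow> (real \<times> 'k) measure \<Rightarrow> ennreal"
  assumes gs: "ground_simple \<xi>" "ground_simple \<xi>'"
  and eq: "\<forall>A\<in>sets borel. A \<subseteq> {0<..} \<times> UNIV \<longrightarrow> emeasure \<xi> A =
           emeasure \<nu> {(t, m, z). (t, m) \<in> A \<and> 0 < z \<and> ennreal z \<le> \<psi> m (restr (shift t \<xi>) {..<0})}"
  and eq': "\<forall>A\<in>sets borel. A \<subseteq> {0<..} \<times> UNIV \<longrightarrow> emeasure \<xi>' A =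
           emeasure \<nu> {(t, m, z). (t, m) \<in> A \<and> 0 < z \<and> ennreal z \<le> \<psi> m (restr (shift t \<xi>') {..<0})}"
  and i: "\<forall>A\<in>sets borel. emeasure \<xi> (A \<inter> ({..0} \<times> UNIV)) = emeasure \<zeta> A"
  and i': "\<forall>A\<in>sets borel. emeasure \<xi>' (A \<inter> ({..0} \<times> UNIV)) = emeasure \<zeta> A"
  shows "\<xi> = \<xi>'"
proof -
  have s: "sets \<xi> = sets borel" "sets \<xi>' = sets borel"
    using gs by (auto simp: ground_simple_def bf_counting_measure_def)
  define good where "good T \<longleftrightarrow> (\<forall>A\<in>sets borel. A \<subseteq> {..<T}\<times>(UNIV::'k set) \<longrightarrow> emeasure \<xi> A = emeasure \<xi>' A)" for T
  define cgood where "cgood T \<longleftrightarrow> (\<forall>A\<in>sets borel. A \<subseteq> {..T}\<times>(UNIV::'k set) \<longrightarrow> emeasure \<xi> A = emeasure \<xi>' A)" for T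
  have Z: "{..(0::real)} \<times> (UNIV::'k set) \<in> sets borel" by (intro borel_closed closed_Times) auto
  have P: "{(0::real)<..} \<times> (UNIV::'k set) \<in> sets borel" by (intro borel_open open_Times) auto
  have mono: "good S" if "good T" "S \<le> T" for S T
    using that unfolding good_def by (meson lessThan_subset_iff order_trans subset_refl Sigma_mono)
  have g0: "good T" if "T \<le> 0" for T
    unfolding good_def
  proof (intro ballI impI)
    fix A :: "(real \<times> 'k) set" assume A: "A \<in> sets borel" "A \<subseteq> {..<T}\<times>UNIV"
    hence "A \<inter> ({..0} \<times> UNIV) = A" using that by auto
    thus "emeasure \<xi> A = emeasure \<xi>' A" using i i' A by metis
  qed
  have b: "cgood T" if gT: "good T" for T
    unfolding cgood_def
  proof (intro ballI impI)
    fix A :: "(real \<times> 'k) set" assume A: "A \<in> sets borel" "A \<subseteq> {..T}\<times>UNIV"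
    define A1 where "A1 = A \<inter> ({..0} \<times> UNIV)"
    define A2 where "A2 = A \<inter> ({0<..} \<times> UNIV)"
    have A12: "A1 \<in> sets borel" "A2 \<in> sets borel" "A1 \<inter> A2 = {}" "A1 \<union> A2 = A"
      using A Z P unfolding A1_def A2_def by auto
    have e1: "emeasure \<xi> A1 = emeasure \<xi>' A1" using i i' A unfolding A1_def by metis
    have rs: "restr (shift t \<xi>) {..<0} = restr (shift t \<xi>') {..<0}" if "t \<le> T" for t
      apply (rule restr_shift_eq[OF s])
      using mono[OF gT that] unfolding good_def by blast
    have setq: "{(t, m, z). (t, m) \<in> A2 \<and> 0 < z \<and> ennreal z \<le> \<psi> m (restr (shift t \<xi>) {..<0})}
       = {(t, m, z). (t, m) \<in> A2 \<and> 0 < z \<and> ennreal z \<le> \<psi> m (restr (shift t \<xi>') {..<0})}"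
    proof -
      have "\<And>t m. (t,m) \<in> A2 \<Longrightarrow> t \<le> T" using A unfolding A2_def by auto
      thus ?thesis using rs by auto
    qed
    have e2: "emeasure \<xi> A2 = emeasure \<xi>' A2"
      using eq[rule_format, of A2] eq'[rule_format, of A2] A12 setq unfolding A2_def by auto
    have "emeasure \<xi> A = emeasure \<xi> A1 + emeasure \<xi> A2"
      using plus_emeasure[of A1 \<xi> A2] A12 s by simp
    also have "\<dots> = emeasure \<xi>' A1 + emeasure \<xi>' A2" using e1 e2 by simp
    also have "\<dots> = emeasure \<xi>' A"
      using plus_emeasure[of A1 \<xi>' A2] A12 s by simp
    finally show "emeasure \<xi> A = emeasure \<xi>' A" .
  qed
  have c: "\<exists>\<delta>>0. good (T + \<delta>)" if cg: "cgood T" for T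
  proof -
    obtain d1 where d1: "d1 > 0" "emeasure \<xi> ({T<..<T+d1}\<times>UNIV) = 0" using zero_near[OF gs(1)] by blast
    obtain d2 where d2: "d2 > 0" "emeasure \<xi>' ({T<..<T+d2}\<times>UNIV) = 0" using zero_near[OF gs(2)] by blast
    define d where "d = min d1 d2"
    have Ob: "{T<..<T+d}\<times>(UNIV::'k set) \<in> sets borel" by (intro borel_open open_Times) auto
    have O1: "{T<..<T+d1}\<times>(UNIV::'k set) \<in> sets borel" by (intro borel_open open_Times) auto
    have S1: "{T<..<T+d}\<times>(UNIV::'k set) \<subseteq> {T<..<T+d1}\<times>UNIV" unfolding d_def by auto
    have z1: "emeasure \<xi> ({T<..<T+d}\<times>UNIV) = 0"
      using O1 S1 emeasure_mono[of "{T<..<T+d}\<times>UNIV" "{T<..<T+d1}\<times>UNIV" \<xi>] d1 Ob s unfolding d_def by auto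
    have O2: "{T<..<T+d2}\<times>(UNIV::'k set) \<in> sets borel" by (intro borel_open open_Times) auto
    have S2: "{T<..<T+d}\<times>(UNIV::'k set) \<subseteq> {T<..<T+d2}\<times>UNIV" unfolding d_def by auto
    have z2: "emeasure \<xi>' ({T<..<T+d}\<times>UNIV) = 0"
      using O2 S2 emeasure_mono[of "{T<..<T+d}\<times>UNIV" "{T<..<T+d2}\<times>UNIV" \<xi>'] d2 Ob s unfolding d_def by auto
    have "good (T + d)" unfolding good_def
    proof (intro ballI impI)
      fix A :: "(real \<times> 'k) set" assume A: "A \<in> sets borel" "A \<subseteq> {..<T+d}\<times>UNIV"
      define A1 where "A1 = A \<inter> ({..T} \<times> UNIV)"
      define A2 where "A2 = A \<inter> ({T<..<T+d} \<times> UNIV)"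
      have Cb: "{..T} \<times> (UNIV::'k set) \<in> sets borel" by (intro borel_closed closed_Times) auto
      have A12: "A1 \<in> sets borel" "A2 \<in> sets borel" "A1 \<inter> A2 = {}" "A1 \<union> A2 = A"
        using A Cb Ob unfolding A1_def A2_def by auto
      have e1: "emeasure \<xi> A1 = emeasure \<xi>' A1" using cg A12 unfolding cgood_def A1_def by auto
      have "emeasure \<xi> A2 \<le> 0"
        using emeasure_mono[of A2 "{T<..<T+d}\<times>UNIV" \<xi>] z1 Ob s unfolding A2_def by auto
      moreover have "emeasure \<xi>' A2 \<le> 0"
        using emeasure_mono[of A2 "{T<..<T+d}\<times>UNIV" \<xi>'] z2 Ob s unfolding A2_def by auto
      ultimately have e2: "emeasure \<xi> A2 = emeasure \<xi>' A2" by simp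
      have "emeasure \<xi> A = emeasure \<xi> A1 + emeasure \<xi> A2"
        using plus_emeasure[of A1 \<xi> A2] A12 s by simp
      also have "\<dots> = emeasure \<xi>' A1 + emeasure \<xi>' A2" using e1 e2 by simp
      also have "\<dots> = emeasure \<xi>' A"
        using plus_emeasure[of A1 \<xi>' A2] A12 s by simp
      finally show "emeasure \<xi> A = emeasure \<xi>' A" .
    qed
    thus ?thesis using d1 d2 unfolding d_def by (intro exI[of _ "min d1 d2"]) auto
  qed
  have d: "good S" if all: "\<And>T. T < S \<Longrightarrow> good T" for S
    unfolding good_def
  proof (intro ballI impI)
    fix A :: "(real \<times> 'k) set" assume A: "A \<in> sets borel" "A \<subseteq> {..<S}\<times>UNIV"
    define C where "C n = {..<S - 1/Suc n} \<times> (UNIV::'k set)" for n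
    show "emeasure \<xi> A = emeasure \<xi>' A"
    proof (rule union_agree[OF s A(1)])
      show "incseq C" unfolding C_def incseq_def
        by (auto simp: frac_le order.strict_trans2)
      show "C n \<in> sets borel" for n unfolding C_def by (intro borel_open open_Times) auto
      show "A \<subseteq> (\<Union>n. C n)"
      proof
        fix x assume "x \<in> A"
        then obtain a b where x: "x = (a,b)" "a < S" using A by auto
        then obtain n where "1 / Suc n < S - a"
          using nat_approx_posE[of "S - a"] by (metis diff_gt_0_iff_gt of_nat_Suc)
        hence "a < S - 1/Suc n" by simp
        hence "x \<in> C n" unfolding C_def x by simp
        thus "x \<in> (\<Union>n. C n)" by blast
      qed
      show "emeasure \<xi> (A \<inter> C n) = emeasure \<xi>' (A \<inter> C n)" for n
      proof -
        have "good (S - 1/Suc n)" by (rule all) simp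
        moreover have "C n \<in> sets borel" unfolding C_def
          by (intro borel_open open_Times) auto
        hence "A \<inter> C n \<in> sets borel" using A by auto
        ultimately show ?thesis unfolding good_def C_def by auto
      qed
    qed
  qed
  have allgood: "good T" for T
  proof (rule ccontr)
    assume nT: "\<not> good T"
    define B where "B = {T. \<not> good T}"
    have Bne: "B \<noteq> {}" using nT B_def by auto
    have Bpos: "b > 0" if "b \<in> B" for b using that g0 unfolding B_def by (metis mem_Collect_eq not_less)
    have bdd: "bdd_below B" using Bpos by (meson bdd_belowI less_le_not_le)
    define T0 where "T0 = Inf B"
    have below: "good T" if "T < T0" for T
    proof (rule ccontr)
      assume "\<not> good T" hence "T \<in> B" unfolding B_def by simp
      hence "T0 \<le> T" unfolding T0_def using bdd by (simp add: cInf_lower)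
      thus False using that by simp
    qed
    have "good T0" by (rule d) (rule below)
    then obtain \<delta> where dl: "\<delta> > 0" "good (T0 + \<delta>)" using c b by blast
    have "Inf B < T0 + \<delta>" using dl unfolding T0_def by simp
    then obtain b0 where "b0 \<in> B" "b0 < T0 + \<delta>" using cInf_less_iff[OF Bne bdd] by auto
    thus False using mono[OF dl(2)] unfolding B_def by auto
  qed
  show ?thesis
  proof (rule measure_eqI)
    show "sets \<xi> = sets \<xi>'" using s by simp
    fix A assume "A \<in> sets \<xi>"
    hence A: "A \<in> sets borel" using s by simp
    show "emeasure \<xi> A = emeasure \<xi>' A"
    proof (rule union_agree[OF s A, of "\<lambda>n. {..<real n} \<times> UNIV"])
      show "incseq (\<lambda>n. {..<real n} \<times> (UNIV::'k set))" unfolding incseq_def by auto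
      show "{..<real n} \<times> (UNIV::'k set) \<in> sets borel" for n by (intro borel_open open_Times) auto
      show "A \<subseteq> (\<Union>n. {..<real n} \<times> UNIV)"
      proof
        fix x assume "x \<in> A"
        obtain n where "fst x < real n" using reals_Archimedean2 by blast
        thus "x \<in> (\<Union>n. {..<real n} \<times> UNIV)" by (cases x) auto
      qed
      show "emeasure \<xi> (A \<inter> {..<real n} \<times> UNIV) = emeasure \<xi>' (A \<inter> {..<real n} \<times> UNIV)" for n
      proof -
        have "{..<real n} \<times> (UNIV::'k set) \<in> sets borel" by (intro borel_open open_Times) auto
        hence "A \<inter> {..<real n} \<times> UNIV \<in> sets borel" using A by auto
        thus ?thesis using allgood[of "real n"] unfolding good_def by blast
      qed
    qed
  qed
qed


theorem theorem2p20:
  fixes P0 :: "'w0 measure" and N0 :: "'w0 \<Rightarrow> (real \<times> 'k::polish_space) measure"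
    and P1 :: "'w1 measure" and M1 :: "'w1 \<Rightarrow> (real \<times> ('k \<times> real)) measure"
    and ell :: "'k measure"
    and \<psi> :: "'k \<Rightarrow> (real \<times> 'k) measure \<Rightarrow> ennreal"
    and N N' :: "'w0 \<times> 'w1 \<Rightarrow> (real \<times> 'k) measure"
  assumes "prob_space P0"
    and "nonexpl_mpp P0 N0"
    and "\<forall>\<omega>\<in>space P0. emeasure (N0 \<omega>) ({0<..} \<times> UNIV) = 0"
    and "sets ell = sets borel"
    and "poisson_process P1 M1 (lborel \<Otimes>\<^sub>M (ell \<Otimes>\<^sub>M lborel))"
    and "case_prod \<psi> \<in> measurable (borel \<Otimes>\<^sub>M NS) (borel :: ennreal measure)"
    and "sde_solution P0 N0 P1 M1 \<psi> N"
    and "sde_solution P0 N0 P1 M1 \<psi> N'"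
  shows "AE \<omega> in completion (P0 \<Otimes>\<^sub>M P1). N \<omega> = N' \<omega>"
  proof -
  let ?C = "completion (P0 \<Otimes>\<^sub>M P1)"
  note d1 = assms(7)[unfolded sde_solution_def] and d2 = assms(8)[unfolded sde_solution_def]
  have g1: "\<forall>\<omega>\<in>space ?C. ground_simple (N \<omega>)" using d1[THEN conjunct1] unfolding nonexpl_mpp_def by (rule conjunct2)
  have g2: "\<forall>\<omega>\<in>space ?C. ground_simple (N' \<omega>)" using d2[THEN conjunct1] unfolding nonexpl_mpp_def by (rule conjunct2)
  note a1 = d1[THEN conjunct2, THEN conjunct2]
  note a2 = d2[THEN conjunct2, THEN conjunct2]
  show ?thesis
    using a1 a2 AE_space[of ?C]
  proof eventually_elim
    case (elim \<omega>)
    show ?case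
      apply (rule det_unique[where \<nu> = "M1 (snd \<omega>)" and \<psi> = \<psi> and \<zeta> = "N0 (fst \<omega>)"])
      subgoal using elim(3) g1 by (rule bspec[rotated])
      subgoal using elim(3) g2 by (rule bspec[rotated])
      subgoal using elim(1) by (rule conjunct1)
      subgoal using elim(2) by (rule conjunct1)
      subgoal using elim(1) by (rule conjunct2)
      subgoal using elim(2) by (rule conjunct2)
      done
  qed
qed

end
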